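(* Let $G=A(n,\theta)$ with $n\ge3$ odd. No element of order $4$ in $G$ is conjugate to its inverse, and $G$ has exactly $2(2^n-1)$ conjugacy classes of elements of order $4$.
   Context: Let $n=2m+1$ be odd, $\mathbb{F}_{2^n}$ the field with $2^n$ elements, $\theta$ a generator of $\mathrm{Gal}(\mathbb{F}_{2^n}/\mathbb{F}_2)$, $a^\theta$ the image of $a$ under $\theta$. $G=A(n,\theta)$ is the group of matrices $\begin{bmatrix}1&a&b\\0&1&a^\theta\\0&0&1\end{bmatrix}$, $a,b\in\mathbb{F}_{2^n}$, denoted $(a,b)$, with $(a,b)(c,d)=(a+c,\,b+d+ac^\theta)$. *)

theory Defs
  imports "HOL-Algebra.Multiplicative_Group"
begin

definition field_aut :: "('a::field \<Rightarrow> 'a) \<Rightarrow> bool" where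
  "field_aut s \<longleftrightarrow> bij s \<and> (\<forall>x y. s (x + y) = s x + s y) \<and> (\<forall>x y. s (x * y) = s x * s y)"

definition galois_generator :: "('a::field \<Rightarrow> 'a) \<Rightarrow> bool" where
  "galois_generator s \<longleftrightarrow> field_aut s \<and> (\<forall>t. field_aut t \<longrightarrow> (\<exists>k::nat. t = (s ^^ k)))"

text \<open>The group A(n,theta): pairs (a,b) standing for the matrix [[1,a,b],[0,1,theta a],[0,0,1]],
  with (a,b)(c,d) = (a+c, b+d+a*theta c).\<close>

definition A_grp :: "('a::field \<Rightarrow> 'a) \<Rightarrow> ('a \<times> 'a) monoid" where
  "A_grp s = \<lparr>carrier = UNIV,
              mult = (\<lambda>(a, b) (c, d). (a + c, b + d + a * s c)),
              one = (0, 0)\<rparr>"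

definition conj_class :: "('g, 'b) monoid_scheme \<Rightarrow> 'g \<Rightarrow> 'g set" where
  "conj_class G x = {g \<otimes>\<^bsub>G\<^esub> x \<otimes>\<^bsub>G\<^esub> inv\<^bsub>G\<^esub> g | g. g \<in> carrier G}"

end

theory Submission
  imports Defs
begin

lemma ff_power_card:
  fixes x :: "'a :: {field, finite}"
  shows "x ^ card (UNIV :: 'a set) = x"
proof (cases "x = 0")
  case False
  have "x * (\<Prod>y\<in>UNIV-{0}. x * y) = x * x ^ (card (UNIV :: 'a set) - 1) * \<Prod>(UNIV-{0})"
    by (simp add: prod.distrib mult_ac)
  also have "x * x ^ (card (UNIV :: 'a set) - 1) = x ^ Suc (card (UNIV :: 'a set) - 1)"
    by (subst power_Suc) auto
  also have "Suc (card (UNIV :: 'a set) - 1) = card (UNIV :: 'a set)"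
    using finite_UNIV_card_ge_0[where ?'a = 'a] by simp
  also have "(\<Prod>y\<in>UNIV-{0}. x * y) = (\<Prod>y\<in>UNIV-{0}. y)"
    by (rule prod.reindex_bij_witness[of _ "\<lambda>y. y / x" "\<lambda>y. x * y"]) (use False in auto)
  finally show ?thesis
    by simp
qed (use finite_UNIV_card_ge_0[where ?'a = 'a] in auto)

locale A_setup =
  fixes s :: "'a::{field, finite} \<Rightarrow> 'a" and n :: nat
  assumes card_F: "card (UNIV :: 'a set) = 2 ^ n" and odd_n: "odd n" and n3: "n \<ge> 3"
    and gen: "galois_generator s"
begin

lemma pow_id: "(x::'a) ^ (2 ^ n) = x"
  using ff_power_card[of x] card_F by simp

lemma two: "(2::'a) = 0"
proof -
  have ev: "even ((2::nat) ^ n)" using n3 by simp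
  have "(-1::'a) ^ (2 ^ n) = 1" using ev by (rule neg_one_even_power)
  then have m: "(-1::'a) = 1" using pow_id[of "-1"] by simp
  have "(2::'a) = 1 - (-1)" by simp
  also have "\<dots> = 0" using m by simp
  finally show ?thesis .
qed

lemma xx [simp]: "(x::'a) + x = 0"
  by (metis mult_2 mult_zero_left two)

lemma xxy [simp]: "(x::'a) + (x + y) = y"
  by (metis add.assoc add_0 xx)

lemma neg [simp]: "- (x::'a) = x"
  by (metis add.inverse_unique xx)

lemma aut: "field_aut s" using gen unfolding galois_generator_def by blast

lemma s_add: "s (x + y) = s x + s y" using aut unfolding field_aut_def by blast
lemma s_mult: "s (x * y) = s x * s y" using aut unfolding field_aut_def by blast
lemma s_inj: "inj s" using aut unfolding field_aut_def bij_def by blast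
lemma s0 [simp]: "s 0 = 0" using s_add[of 0 0] by simp
lemma s1 [simp]: "s 1 = 1"
proof -
  have "s 1 * s 1 = s 1" using s_mult[of 1 1] by simp
  moreover have "s 1 \<noteq> 0" using s_inj s0 by (metis inj_eq one_neq_zero)
  ultimately show ?thesis by (metis mult_cancel_right2)
qed
lemma s_eq0 [simp]: "s x = 0 \<longleftrightarrow> x = 0" using s_inj s0 by (metis inj_eq)

lemma frob_aut: "field_aut (\<lambda>x::'a. x ^ 2)"
proof -
  have sq_add: "(x + y) ^ 2 = x ^ 2 + y ^ 2" for x y :: 'a
    by (simp add: power2_sum two)
  have "inj (\<lambda>x::'a. x ^ 2)"
  proof (rule injI)
    fix x y :: 'a assume "x ^ 2 = y ^ 2"
    then have "(x + y) ^ 2 = 0" by (simp add: sq_add)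
    then have "x + y = 0" by simp
    then show "x = y" by (metis add_right_cancel xx)
  qed
  then have "bij (\<lambda>x::'a. x ^ 2)" using finite_UNIV_inj_surj[of "\<lambda>x::'a. x ^ 2"]
    by (simp add: bij_def)
  then show ?thesis unfolding field_aut_def by (simp add: sq_add power_mult_distrib)
qed

lemma frob_pow: "\<exists>k. (\<lambda>x::'a. x ^ 2) = s ^^ k"
  using gen frob_aut unfolding galois_generator_def by blast

lemma fix_s: assumes "s u = u" shows "u = 0 \<or> u = 1"
proof -
  obtain k where k: "(\<lambda>x::'a. x ^ 2) = s ^^ k" using frob_pow by blast
  have "(s ^^ m) u = u" for m by (induction m) (simp_all add: assms)
  then have "u ^ 2 = u" using fun_cong[OF k, of u] by simp
  then have "u * (u - 1) = 0" by (simp add: algebra_simps power2_eq_square)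
  then show ?thesis by simp
qed

lemma no_sol: assumes "s t = t + 1" shows False
proof -
  obtain k where k: "(\<lambda>x::'a. x ^ 2) = s ^^ k" using frob_pow by blast
  have it: "(s ^^ m) t = (if even m then t else t + 1)" for m
    by (induction m) (simp_all add: assms s_add two add.assoc)
  show False
  proof (cases "even k")
    case True
    then have "t ^ 2 = t" using fun_cong[OF k, of t] it[of k] by simp
    then have "t * (t - 1) = 0" by (simp add: algebra_simps power2_eq_square)
    then have "t = 0 \<or> t = 1" by simp
    then show False using assms by auto
  next
    case False
    have p: "((\<lambda>x::'a. x ^ 2) ^^ m) t = t ^ (2 ^ m)" for m
      by (induction m) (simp_all add: power_mult[symmetric] mult.commute)
    have "((\<lambda>x::'a. x ^ 2) ^^ n) t = (s ^^ (k * n)) t" by (simp add: k funpow_mult)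
    then have "t = t + 1" using p[of n] pow_id it[of "k*n"] False odd_n by simp
    then show False by simp
  qed
qed

abbreviation "G \<equiv> A_grp s"

lemma mult_G [simp]: "(a, b) \<otimes>\<^bsub>G\<^esub> (c, d) = (a + c, b + d + a * s c)"
  by (simp add: A_grp_def)
lemma one_G [simp]: "\<one>\<^bsub>G\<^esub> = (0, 0)" by (simp add: A_grp_def)
lemma carrier_G [simp]: "carrier G = UNIV" by (simp add: A_grp_def)

lemma grp: "group G"
proof (rule groupI)
  fix x y z :: "'a \<times> 'a"
  show "x \<otimes>\<^bsub>G\<^esub> y \<otimes>\<^bsub>G\<^esub> z = x \<otimes>\<^bsub>G\<^esub> (y \<otimes>\<^bsub>G\<^esub> z)"
    by (cases x; cases y; cases z) (simp add: s_add algebra_simps)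
  show "\<one>\<^bsub>G\<^esub> \<otimes>\<^bsub>G\<^esub> x = x" by (cases x) simp
  show "\<exists>y\<in>carrier G. y \<otimes>\<^bsub>G\<^esub> x = \<one>\<^bsub>G\<^esub>"
  proof (cases x)
    case (Pair a b)
    show ?thesis by (rule bexI[of _ "(a, b + a * s a)"]) (simp_all add: Pair algebra_simps)
  qed
qed auto

lemma inv_G [simp]: "inv\<^bsub>G\<^esub> (a, b) = (a, b + a * s a)"
  by (rule group.inv_equality[OF grp]) (simp_all add: algebra_simps)

lemma sq_G: "(a, b) [^]\<^bsub>G\<^esub> (2::nat) = (0, a * s a)"
  by (simp add: numeral_2_eq_2 algebra_simps)

lemma ord_G: "group.ord G (a, b) = 4 \<longleftrightarrow> a \<noteq> 0"
proof -
  interpret group G by (rule grp)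
  have p4: "(a, b) [^]\<^bsub>G\<^esub> (4::nat) = ((a, b) [^]\<^bsub>G\<^esub> (2::nat)) [^]\<^bsub>G\<^esub> (2::nat)"
    by (simp add: nat_pow_pow)
  have 4: "(a, b) [^]\<^bsub>G\<^esub> (4::nat) = \<one>\<^bsub>G\<^esub>" unfolding p4 sq_G by (simp add: sq_G)
  show ?thesis
  proof
    assume o: "ord (a, b) = 4"
    show "a \<noteq> 0"
    proof
      assume "a = 0"
      then have "(a, b) [^]\<^bsub>G\<^esub> (2::nat) = \<one>\<^bsub>G\<^esub>" by (simp add: sq_G)
      then have "ord (a, b) dvd 2" using pow_eq_id by simp
      then show False using o by simp
    qed
  next
    assume a: "a \<noteq> 0"
    have d4: "ord (a, b) dvd 4" using 4 pow_eq_id by simp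
    have "(a, b) [^]\<^bsub>G\<^esub> (2::nat) \<noteq> \<one>\<^bsub>G\<^esub>" using a by (simp add: sq_G)
    then have nd2: "\<not> ord (a, b) dvd 2" using pow_eq_id by simp
    have "ord (a, b) \<le> 4" using d4 by (simp add: dvd_imp_le)
    then have "ord (a, b) \<in> {0,1,2,3,4}" by auto
    then show "ord (a, b) = 4" using d4 nd2 by auto
  qed
qed

definition L :: "'a \<Rightarrow> 'a \<Rightarrow> 'a" where "L a c = c * s a + a * s c"

lemma conj_G: "conj_class G (a, b) = {(a, b + L a c) | c. True}"
proof -
  have "(c, d) \<otimes>\<^bsub>G\<^esub> (a, b) \<otimes>\<^bsub>G\<^esub> inv\<^bsub>G\<^esub> (c, d) = (a, b + L a c)" for c d
    by (simp add: L_def algebra_simps)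
  then show ?thesis unfolding conj_class_def by auto
qed

lemma part1: assumes "a \<noteq> 0" shows "inv\<^bsub>G\<^esub> (a, b) \<notin> conj_class G (a, b)"
proof
  assume "inv\<^bsub>G\<^esub> (a, b) \<in> conj_class G (a, b)"
  then obtain c where c: "b + a * s a = b + L a c" by (auto simp: conj_G)
  define t where "t = c / a"
  have ct: "c = t * a" using assms by (simp add: t_def)
  have "L a c = a * s a * (t + s t)" unfolding L_def ct
    by (simp add: s_mult algebra_simps)
  then have "a * s a * (t + s t) = a * s a * 1" using c by simp
  then have "t + s t = 1" using assms by simp
  then have "s t = t + 1" by (metis add.commute xxy)
  then show False by (rule no_sol)
qed

lemma w_notin: assumes "a \<noteq> 0" shows "L a c \<noteq> a * s a"
proof
  assume "L a c = a * s a"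
  then have "inv\<^bsub>G\<^esub> (a, 0) \<in> conj_class G (a, 0)" by (simp add: conj_G, metis)
  then show False using part1[OF assms] by blast
qed

lemma s_inverse: "s (inverse y) = inverse (s y)"
proof (cases "y = 0")
  case False
  have "s y * s (inverse y) = 1" using s_mult[of y "inverse y"] False by simp
  then show ?thesis by (metis inverse_unique)
qed simp

lemma s_div: "s (x / y) = s x / s y"
  by (simp add: divide_inverse s_mult s_inverse)

lemma eq_char2: "(x::'a) + y = 0 \<longleftrightarrow> x = y"
  by (metis add_right_cancel xx)

lemma L_add: "L a (c + c') = L a c + L a c'"
  by (simp add: L_def s_add algebra_simps)

lemma L0 [simp]: "L a 0 = 0" by (simp add: L_def)

lemma ker: assumes a: "a \<noteq> 0" shows "L a t = 0 \<longleftrightarrow> t = 0 \<or> t = a"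
proof
  assume "L a t = 0"
  then have e: "t * s a = a * s t" unfolding L_def by (simp add: eq_char2)
  have "s (t / a) = t / a" using a e by (simp add: s_div field_simps)
  then have "t / a = 0 \<or> t / a = 1" by (rule fix_s)
  then show "t = 0 \<or> t = a" using a by auto
next
  assume "t = 0 \<or> t = a"
  then show "L a t = 0" by (auto simp: L_def)
qed

lemma L_eq: assumes a: "a \<noteq> 0" shows "L a x = L a c \<longleftrightarrow> x = c \<or> x = c + a"
proof -
  have "L a x = L a c \<longleftrightarrow> L a (x + c) = 0" by (simp add: L_add eq_char2)
  also have "\<dots> \<longleftrightarrow> x + c = 0 \<or> x + c = a" by (rule ker[OF a])
  also have "\<dots> \<longleftrightarrow> x = c \<or> x = c + a"
    by (metis add.commute eq_char2 xxy)
  finally show ?thesis .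
qed

lemma card_H: assumes a: "a \<noteq> 0" shows "card (range (L a)) * 2 = 2 ^ n"
proof -
  have "card (UNIV :: 'a set) = (\<Sum>y\<in>range (L a). card {x. L a x = y})"
    using sum.image_gen[of "UNIV :: 'a set" "\<lambda>_. 1::nat" "L a"] by simp
  also have "\<dots> = (\<Sum>y\<in>range (L a). 2)"
  proof (rule sum.cong)
    fix y assume "y \<in> range (L a)"
    then obtain c where y: "y = L a c" by auto
    have "{x. L a x = y} = {c, c + a}" using L_eq[OF a] y by auto
    moreover have "c \<noteq> c + a" using a by simp
    ultimately show "card {x. L a x = y} = 2" by simp
  qed simp
  finally show ?thesis using card_F by simp
qed

lemma H_closed: "L a c + L a c' \<in> range (L a)"
  by (metis L_add rangeI)

lemma index2: assumes a: "a \<noteq> 0" shows "b \<in> range (L a) \<or> b + a * s a \<in> range (L a)"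
proof (rule ccontr)
  assume nb: "\<not> ?thesis"
  define H where "H = range (L a)"
  define w where "w = a * s a"
  have wH: "w \<notin> H" using w_notin[OF a] unfolding H_def w_def by (metis rangeE)
  have sub: "(\<lambda>h. h + w) ` H \<subseteq> - H"
  proof
    fix y assume "y \<in> (\<lambda>h. h + w) ` H"
    then obtain c where y: "y = L a c + w" unfolding H_def by auto
    show "y \<in> - H"
    proof
      assume "y \<in> H"
      then obtain c' where "y = L a c'" unfolding H_def by auto
      then have "w = L a c + L a c'" using y by (metis add.commute xxy)
      then show False using wH H_closed unfolding H_def by metis
    qed
  qed
  have "card ((\<lambda>h. h + w) ` H) = card H" by (rule card_image) (simp add: inj_on_def)
  moreover have "card (- H) = card H"
  proof -
    have "card (- H) = card (UNIV :: 'a set) - card H"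
      by (simp add: Compl_eq_Diff_UNIV card_Diff_subset)
    then show ?thesis using card_H[OF a] card_F unfolding H_def by simp
  qed
  ultimately have "(\<lambda>h. h + w) ` H = - H"
    using sub by (simp add: card_subset_eq)
  moreover have "b \<in> - H" using nb unfolding H_def by auto
  ultimately obtain h where "h \<in> H" "b = h + w" by auto
  then have "b + w \<in> H" by (metis add.commute xxy add.assoc xx add_0_right)
  then show False using nb unfolding H_def w_def by auto
qed

lemma cc_sub: assumes "b + b' \<in> range (L a)"
  shows "conj_class G (a, b) \<subseteq> conj_class G (a, b')"
proof
  fix x assume "x \<in> conj_class G (a, b)"
  then obtain c where x: "x = (a, b + L a c)" by (auto simp: conj_G)
  obtain e where e: "L a e = b + b'" using assms by auto
  have "b + L a c = b' + L a (c + e)" by (simp add: L_add e algebra_simps)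
  then show "x \<in> conj_class G (a, b')" using x by (auto simp: conj_G)
qed

lemma cc_eq: assumes "b + b' \<in> range (L a)"
  shows "conj_class G (a, b) = conj_class G (a, b')"
  using cc_sub[OF assms] cc_sub[of b' b a] assms by (simp add: add.commute)

lemma self_in: "(a, b) \<in> conj_class G (a, b)"
  by (auto simp: conj_G intro!: exI[of _ 0])

lemma T_card: assumes a: "a \<noteq> 0" shows "card {conj_class G (a, b) | b. True} = 2"
proof -
  define w where "w = a * s a"
  have "{conj_class G (a, b) | b. True} \<subseteq> {conj_class G (a, 0), conj_class G (a, w)}"
  proof
    fix C assume "C \<in> {conj_class G (a, b) | b. True}"
    then obtain b where C: "C = conj_class G (a, b)" by auto
    from index2[OF a, of b] show "C \<in> {conj_class G (a, 0), conj_class G (a, w)}"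
    proof
      assume "b \<in> range (L a)" then show ?thesis using cc_eq[of b 0 a] C by simp
    next
      assume "b + a * s a \<in> range (L a)" then show ?thesis using cc_eq[of b w a] C w_def by simp
    qed
  qed
  moreover have "{conj_class G (a, 0), conj_class G (a, w)} \<subseteq> {conj_class G (a, b) | b. True}"
    by blast
  ultimately have "{conj_class G (a, b) | b. True} = {conj_class G (a, 0), conj_class G (a, w)}"
    by (rule equalityI)
  moreover have "conj_class G (a, 0) \<noteq> conj_class G (a, w)"
  proof
    assume "conj_class G (a, 0) = conj_class G (a, w)"
    then have "(a, w) \<in> conj_class G (a, 0)" using self_in by metis
    then obtain c where wc: "w = L a c" by (auto simp: conj_G)
    then show False using w_notin[OF a, of c] w_def wc by simp
  qed
  ultimately show ?thesis by simp
qed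

lemma part2: "card {conj_class G x | x. x \<in> carrier G \<and> group.ord G x = 4} = 2 * (2 ^ n - 1)"
proof -
  define T where "T a = {conj_class G (a, b) | b. True}" for a
  have S: "{conj_class G x | x. x \<in> carrier G \<and> group.ord G x = 4} = (\<Union>a\<in>UNIV - {0}. T a)"
    unfolding T_def by (auto simp: ord_G)
  have "card (\<Union>a\<in>UNIV - {0}. T a) = (\<Sum>a\<in>UNIV - {0}. card (T a))"
  proof (rule card_UN_disjoint)
    show "\<forall>i\<in>UNIV - {0}. \<forall>j\<in>UNIV - {0}. i \<noteq> j \<longrightarrow> T i \<inter> T j = {}"
    proof (intro ballI impI)
      fix i j :: 'a assume "i \<noteq> j"
      show "T i \<inter> T j = {}"
      proof (rule ccontr)
        assume "T i \<inter> T j \<noteq> {}"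
        then obtain b b' where "conj_class G (i, b) = conj_class G (j, b')" unfolding T_def by auto
        then have "(i, b) \<in> conj_class G (j, b')" using self_in by metis
        then show False using \<open>i \<noteq> j\<close> by (auto simp: conj_G)
      qed
    qed
  qed auto
  also have "\<dots> = (\<Sum>a\<in>UNIV - {0::'a}. 2)" by (rule sum.cong[OF refl]) (unfold T_def, rule T_card, simp)
  also have "\<dots> = 2 * (2 ^ n - 1)" using card_F by (simp add: card_Diff_singleton)
  finally show ?thesis using S by simp
qed

end

theorem lemma3p1:
  fixes s :: "'a::{field, finite} \<Rightarrow> 'a" and n :: nat
  assumes "card (UNIV :: 'a set) = 2 ^ n" and "odd n" and "n \<ge> 3"
    and "galois_generator s"
  shows "(\<forall>x \<in> carrier (A_grp s). group.ord (A_grp s) x = 4 \<longrightarrow>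
            inv\<^bsub>A_grp s\<^esub> x \<notin> conj_class (A_grp s) x)
       \<and> card {conj_class (A_grp s) x | x. x \<in> carrier (A_grp s) \<and> group.ord (A_grp s) x = 4}
           = 2 * (2 ^ n - 1)"
proof -
  interpret A_setup s n using assms by unfold_locales
  show ?thesis using part1 part2 ord_G by auto
qed

end
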